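(* Let $0<\delta<\frac12$, $n\ge1$, let $\mathbf{y}=(y_1,\dots,y_{n-1})\in D_n$ and $\varphi=(\varphi_1,\dots,\varphi_n)\in E_\delta^n$. Then there is a unique $\mathbf{x}=(x_1,\dots,x_{n-1})\in D_n$ for which there exists a function $\bar\varphi\in E_\delta$ whose restriction to $[x_{i-1},x_i]$ equals $(\varphi_i;[x_{i-1},x_i],[y_{i-1},y_i])$ for each $i$ with $1\le i\le n$ (with the conventions $x_0=y_0=0$, $x_n=y_n=1$).
   Context: $I=[0,1]$. $E_\delta=\mathrm{Diff}_+^{1,\delta}(I)$ is the set of $C^1$ diffeomorphisms $f$ of $I$ fixing $0$ and $1$ whose derivative $f'$ is Hölder continuous of exponent $\delta$; $E_\delta^n$ is its $n$-fold Cartesian product. $D_n=\{(x_1,\dots,x_{n-1}):0<x_1<\cdots<x_{n-1}<1\}$. For $\varphi\in E_\delta$ and closed intervals $J,K\subset\mathbb{R}$ with nonempty interior, where $J$ has left endpoint $x$ and length $j$ and $K$ has left endpoint $y$ and length $k$, the affine distortion $(\varphi;J,K):J\to K$ is $t\mapsto y+k\,\varphi\!\left(\frac{t-x}{j}\right)$. *)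

theory Defs
  imports "HOL-Analysis.Analysis"
begin

text \<open>E_delta = Diff_+^{1,delta}(I): orientation preserving C^1 diffeomorphisms of I=[0,1]
  (fixing 0 and 1) whose derivative is delta-Hoelder continuous on I. Only the values on I matter.\<close>
definition E :: "real \<Rightarrow> (real \<Rightarrow> real) set" where
  "E \<delta> = {f. f 0 = 0 \<and> f 1 = 1 \<and> bij_betw f {0..1} {0..1} \<and>
     (\<exists>f'. (\<forall>x\<in>{0..1}. (f has_real_derivative f' x) (at x within {0..1})) \<and>
           (\<forall>x\<in>{0..1}. f' x > 0) \<and>
           (\<exists>C. \<forall>x\<in>{0..1}. \<forall>y\<in>{0..1}. \<bar>f' x - f' y\<bar> \<le> C * \<bar>x - y\<bar> powr \<delta>))}"

definition D :: "nat \<Rightarrow> real list set" where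
  "D n = {xs. length xs = n - 1 \<and> sorted_wrt (<) xs \<and> (\<forall>x\<in>set xs. 0 < x \<and> x < 1)}"

text \<open>Padding with the conventions x_0 = 0, x_n = 1: (pad xs) ! i = x_i.\<close>
definition pad :: "real list \<Rightarrow> real list" where
  "pad xs = 0 # xs @ [1]"

text \<open>Affine distortion (phi; J, K) with J = [a,b], K = [c,d].\<close>
definition affdist :: "(real \<Rightarrow> real) \<Rightarrow> real \<Rightarrow> real \<Rightarrow> real \<Rightarrow> real \<Rightarrow> real \<Rightarrow> real" where
  "affdist \<phi> a b c d t = c + (d - c) * \<phi> ((t - a) / (b - a))"

end

theory Submission
  imports Defs
begin

lemma affdist_deriv:
  fixes \<phi> \<phi>' :: "real \<Rightarrow> real"
  assumes ab: "a < b" and d\<phi>: "\<forall>u\<in>{0..1}. (\<phi> has_real_derivative \<phi>' u) (at u within {0..1})"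
    and t: "t \<in> {a..b}"
  shows "(affdist \<phi> a b c d has_real_derivative ((d - c) / (b - a) * \<phi>' ((t - a) / (b - a)))) (at t within {a..b})"
proof -
  let ?g = "\<lambda>t. (t - a) / (b - a)"
  have gd: "(?g has_real_derivative (1 / (b - a))) (at t within {a..b})"
    using ab by (auto intro!: derivative_eq_intros)
  have gin: "?g ` {a..b} \<subseteq> {0..1}" using ab by (auto simp: field_simps)
  have "?g t \<in> {0..1}" using gin t by blast
  then have "(\<phi> has_real_derivative \<phi>' (?g t)) (at (?g t) within ?g ` {a..b})"
    using d\<phi> DERIV_subset gin by blast
  from DERIV_image_chain[OF this gd]
  have "((\<phi> \<circ> ?g) has_real_derivative \<phi>' (?g t) * (1 / (b - a))) (at t within {a..b})" .
  then have "((\<lambda>t. c + (d - c) * (\<phi> \<circ> ?g) t) has_real_derivative 0 + (d - c) * (\<phi>' (?g t) * (1 / (b - a)))) (at t within {a..b})"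
    by (intro derivative_intros DERIV_cmult)
  then show ?thesis unfolding affdist_def o_def by (simp add: field_simps)
qed

lemma deriv_pos_strict_mono:
  fixes f f' :: "real \<Rightarrow> real"
  assumes "\<forall>x\<in>{a..b}. (f has_real_derivative f' x) (at x within {a..b})"
    and "\<forall>x\<in>{a..b}. f' x > 0" and "a \<le> x" "x < y" "y \<le> b"
  shows "f x < f y"
proof -
  have "\<forall>z\<in>{x..y}. (f has_real_derivative f' z) (at z within {x..y})"
  proof
    fix z assume "z \<in> {x..y}"
    then have "(f has_real_derivative f' z) (at z within {a..b})" using assms(1,3,4,5) by auto
    then show "(f has_real_derivative f' z) (at z within {x..y})"
      by (rule DERIV_subset) (use assms in auto)
  qed
  then have "\<exists>z\<in>{x<..<y}. f y - f x = f' z * (y - x)"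
    using \<open>x < y\<close> unfolding has_field_derivative_def
    by (intro mvt_simple[of x y f "\<lambda>z h. f' z * h"]) auto
  then obtain z where z: "z \<in> {x<..<y}" "f y - f x = f' z * (y - x)" by blast
  have "f' z > 0" using z assms by auto
  then have "f' z * (y - x) > 0" using \<open>x < y\<close> by simp
  then show ?thesis using z by linarith
qed

lemma deriv_within_trivial:
  fixes f :: "real \<Rightarrow> real"
  assumes "closed S" "x \<notin> S"
  shows "(f has_real_derivative Dv) (at x within S)"
proof -
  have "\<not> x islimpt S" using assms closed_limpt by blast
  then have "at x within S = bot" using trivial_limit_within by blast
  then show ?thesis by (simp add: has_field_derivative_iff)
qed

lemma deriv_within_UN:
  fixes f :: "real \<Rightarrow> real"
  assumes "finite I" "\<forall>i\<in>I. (f has_real_derivative Dv) (at x within S i)"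
  shows "(f has_real_derivative Dv) (at x within (\<Union>i\<in>I. S i))"
  using assms
proof (induction I rule: finite_induct)
  case empty
  then show ?case by (simp add: has_field_derivative_iff)
next
  case (insert i I)
  then show ?case by (simp add: has_field_derivative_iff Lim_within_Un)
qed

lemma part_mono:
  fixes X :: "nat \<Rightarrow> real"
  assumes "\<forall>i<n. X i < X (Suc i)" "i < j" "j \<le> n"
  shows "X i < X j"
  using assms(2,3)
proof (induction j)
  case 0 then show ?case by simp
next
  case (Suc j)
  have s: "X j < X (Suc j)" using assms(1) Suc.prems by auto
  show ?case
  proof (cases "i = j")
    case True then show ?thesis using s by simp
  next
    case False then show ?thesis using Suc s by auto
  qed
qed

lemma part_mono_le:
  fixes X :: "nat \<Rightarrow> real"
  assumes "\<forall>i<n. X i < X (Suc i)" "i \<le> j" "j \<le> n"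
  shows "X i \<le> X j"
  using part_mono[OF assms(1)] assms(2,3) by (cases "i = j") (auto intro: less_imp_le)

definition pidx :: "(nat \<Rightarrow> real) \<Rightarrow> real \<Rightarrow> nat" where
  "pidx X t = (LEAST i. 1 \<le> i \<and> t \<le> X i)"

lemma pidx_props:
  fixes X :: "nat \<Rightarrow> real"
  assumes "n \<ge> 1" "\<forall>i<n. X i < X (Suc i)" "X 0 \<le> t" "t \<le> X n"
  shows "1 \<le> pidx X t" "pidx X t \<le> n" "t \<le> X (pidx X t)" "X (pidx X t - 1) \<le> t"
proof -
  have ex: "1 \<le> n \<and> t \<le> X n" using assms by auto
  show p1: "1 \<le> pidx X t" "t \<le> X (pidx X t)" unfolding pidx_def
    using LeastI[of "\<lambda>i. 1 \<le> i \<and> t \<le> X i", OF ex] by auto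
  show pn: "pidx X t \<le> n" unfolding pidx_def using Least_le[of "\<lambda>i. 1 \<le> i \<and> t \<le> X i", OF ex] .
  show "X (pidx X t - 1) \<le> t"
  proof (cases "pidx X t = 1")
    case True then show ?thesis using assms by simp
  next
    case False
    then have "pidx X t - 1 < pidx X t" "1 \<le> pidx X t - 1" using p1 by auto
    then have "\<not> (1 \<le> pidx X t - 1 \<and> t \<le> X (pidx X t - 1))"
      unfolding pidx_def using not_less_Least by blast
    then show ?thesis using \<open>1 \<le> pidx X t - 1\<close> by auto
  qed
qed

lemma pidx_in:
  fixes X :: "nat \<Rightarrow> real"
  assumes "n \<ge> 1" "\<forall>i<n. X i < X (Suc i)" "i \<in> {1..n}" "t \<in> {X (i - 1)..X i}"
  shows "pidx X t = i \<or> (pidx X t = i - 1 \<and> 2 \<le> i \<and> t = X (i - 1))"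
proof -
  have "X 0 \<le> X (i - 1)" using part_mono_le[OF assms(2), of 0 "i - 1"] assms(3) by auto
  then have t0: "X 0 \<le> t" using assms(4) by auto
  have tn: "t \<le> X n" using part_mono_le[OF assms(2), of i n] assms(3,4) by auto
  note P = pidx_props[OF assms(1,2) t0 tn]
  have le: "pidx X t \<le> i" unfolding pidx_def using assms(3,4) by (intro Least_le) auto
  show ?thesis
  proof (cases "pidx X t = i")
    case True then show ?thesis by simp
  next
    case False
    then have lt: "pidx X t < i" using le by simp
    have "\<not> pidx X t < i - 1"
    proof
      assume "pidx X t < i - 1"
      then have "X (pidx X t) < X (i - 1)" using part_mono[OF assms(2)] assms(3) by auto
      then show False using P(3) assms(4) by auto
    qed
    then have e: "pidx X t = i - 1" using lt by auto
    then have "t \<le> X (i - 1)" using P(3) by simp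
    then show ?thesis using e P(1) assms(4) lt by auto
  qed
qed

lemma glue_exists:
  fixes X :: "nat \<Rightarrow> real" and g :: "nat \<Rightarrow> real \<Rightarrow> 'a"
  assumes "n \<ge> 1" "\<forall>i<n. X i < X (Suc i)"
    and agree: "\<forall>i\<in>{1..<n}. g i (X i) = g (Suc i) (X i)"
  shows "\<forall>i\<in>{1..n}. \<forall>t\<in>{X (i - 1)..X i}. g (pidx X t) t = g i t"
proof (intro ballI)
  fix i t assume i: "i \<in> {1..n}" and t: "t \<in> {X (i - 1)..X i}"
  from pidx_in[OF assms(1,2) i t] show "g (pidx X t) t = g i t"
  proof
    assume "pidx X t = i - 1 \<and> 2 \<le> i \<and> t = X (i - 1)"
    moreover have "i - 1 \<in> {1..<n}" "Suc (i - 1) = i" using calculation i by auto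
    ultimately show ?thesis using agree by metis
  qed simp
qed

lemma holder_glue:
  fixes X :: "nat \<Rightarrow> real" and h :: "real \<Rightarrow> real"
  assumes "n \<ge> 1" "\<forall>i<n. X i < X (Suc i)" "X 0 = 0" "X n = 1" "0 \<le> \<delta>" "0 \<le> K"
    and H: "\<forall>i\<in>{1..n}. \<forall>x\<in>{X (i - 1)..X i}. \<forall>y\<in>{X (i - 1)..X i}. \<bar>h x - h y\<bar> \<le> K * \<bar>x - y\<bar> powr \<delta>"
  shows "\<forall>x\<in>{0..1}. \<forall>y\<in>{0..1}. \<bar>h x - h y\<bar> \<le> (real n * K) * \<bar>x - y\<bar> powr \<delta>"
proof -
  have claim: "1 \<le> k \<Longrightarrow> k \<le> n \<Longrightarrow> 0 \<le> x \<Longrightarrow> x \<le> y \<Longrightarrow> y \<le> X k \<Longrightarrow>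
      \<bar>h x - h y\<bar> \<le> (real k * K) * \<bar>x - y\<bar> powr \<delta>" for k x y
  proof (induction k arbitrary: x y)
    case 0 then show ?case by simp
  next
    case (Suc k)
    show ?case
    proof (cases "k = 0")
      case True
      then have "\<bar>h x - h y\<bar> \<le> K * \<bar>x - y\<bar> powr \<delta>"
        using H[rule_format, of 1 x y] Suc.prems assms(3) by auto
      then show ?thesis using True by simp
    next
      case False
      have Xk: "X k < X (Suc k)" using assms(2) Suc.prems by auto
      have Xk0: "0 \<le> X k" using part_mono_le[OF assms(2), of 0 k] assms(3) Suc.prems by auto
      have pw0: "0 \<le> K * \<bar>x - y\<bar> powr \<delta>" using assms(6) by simp
      consider "y \<le> X k" | "X k \<le> x" | "x < X k" "X k < y" by linarith
      then show ?thesis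
      proof cases
        case 1
        then have "\<bar>h x - h y\<bar> \<le> (real k * K) * \<bar>x - y\<bar> powr \<delta>"
          using Suc False by auto
        also have "\<dots> \<le> (real (Suc k) * K) * \<bar>x - y\<bar> powr \<delta>"
          using pw0 mult_nonneg_nonneg[OF of_nat_0_le_iff pw0, of k] by (simp add: algebra_simps)
        finally show ?thesis .
      next
        case 2
        then have "\<bar>h x - h y\<bar> \<le> K * \<bar>x - y\<bar> powr \<delta>"
          using H[rule_format, of "Suc k" x y] Suc.prems by auto
        also have "\<dots> \<le> (real (Suc k) * K) * \<bar>x - y\<bar> powr \<delta>"
          using pw0 mult_nonneg_nonneg[OF of_nat_0_le_iff pw0, of k] by (simp add: algebra_simps)
        finally show ?thesis .
      next
        case 3
        have a: "\<bar>h x - h (X k)\<bar> \<le> (real k * K) * \<bar>x - X k\<bar> powr \<delta>"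
          using Suc.IH[of x "X k"] Suc.prems False 3 by auto
        have b: "\<bar>h (X k) - h y\<bar> \<le> K * \<bar>X k - y\<bar> powr \<delta>"
          using H[rule_format, of "Suc k" "X k" y] Suc.prems 3 by auto
        have m1: "\<bar>x - X k\<bar> powr \<delta> \<le> \<bar>x - y\<bar> powr \<delta>"
          using 3 assms(5) by (intro powr_mono2) auto
        have m2: "\<bar>X k - y\<bar> powr \<delta> \<le> \<bar>x - y\<bar> powr \<delta>"
          using 3 assms(5) by (intro powr_mono2) auto
        have "\<bar>h x - h y\<bar> \<le> \<bar>h x - h (X k)\<bar> + \<bar>h (X k) - h y\<bar>" by simp
        also have "\<dots> \<le> (real k * K) * \<bar>x - y\<bar> powr \<delta> + K * \<bar>x - y\<bar> powr \<delta>"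
        proof -
          have "0 \<le> real k * K" using assms(6) by simp
          then have "(real k * K) * \<bar>x - X k\<bar> powr \<delta> \<le> (real k * K) * \<bar>x - y\<bar> powr \<delta>"
            using m1 by (intro mult_left_mono)
          moreover have "K * \<bar>X k - y\<bar> powr \<delta> \<le> K * \<bar>x - y\<bar> powr \<delta>"
            using m2 assms(6) by (intro mult_left_mono)
          ultimately show ?thesis using a b by linarith
        qed
        also have "\<dots> = (real (Suc k) * K) * \<bar>x - y\<bar> powr \<delta>" by (simp add: algebra_simps)
        finally show ?thesis .
      qed
    qed
  qed
  show ?thesis
  proof (intro ballI)
    fix x y :: real assume x: "x \<in> {0..1}" and y: "y \<in> {0..1}"
    show "\<bar>h x - h y\<bar> \<le> (real n * K) * \<bar>x - y\<bar> powr \<delta>"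
    proof (cases "x \<le> y")
      case True then show ?thesis using claim[of n x y] x y assms by auto
    next
      case False
      then have "\<bar>h y - h x\<bar> \<le> (real n * K) * \<bar>y - x\<bar> powr \<delta>" using claim[of n y x] x y assms by auto
      then show ?thesis by (simp add: abs_minus_commute)
    qed
  qed
qed


lemma part_union:
  fixes X :: "nat \<Rightarrow> real"
  assumes "n \<ge> 1" "\<forall>i<n. X i < X (Suc i)" "X 0 = 0" "X n = 1"
  shows "(\<Union>i\<in>{1..n}. {X (i - 1)..X i}) = {0..1}"
proof
  show "(\<Union>i\<in>{1..n}. {X (i - 1)..X i}) \<subseteq> {0..1}"
  proof (clarify)
    fix i t assume i: "i \<in> {1..n}" and t: "t \<in> {X (i - 1)..X i}"
    have "X 0 \<le> X (i - 1)" "X i \<le> X n" using part_mono_le[OF assms(2)] i by auto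
    then show "t \<in> {0..1}" using t assms by auto
  qed
next
  show "{0..1} \<subseteq> (\<Union>i\<in>{1..n}. {X (i - 1)..X i})"
  proof
    fix t :: real assume "t \<in> {0..1}"
    then have "X 0 \<le> t" "t \<le> X n" using assms by auto
    note P = pidx_props[OF assms(1,2) this]
    then show "t \<in> (\<Union>i\<in>{1..n}. {X (i - 1)..X i})" by auto
  qed
qed

definition dE :: "(real \<Rightarrow> real) \<Rightarrow> real \<Rightarrow> real \<Rightarrow> real" where
  "dE \<phi> \<delta> = (SOME f'. (\<forall>x\<in>{0..1}. (\<phi> has_real_derivative f' x) (at x within {0..1})) \<and>
           (\<forall>x\<in>{0..1}. f' x > 0) \<and>
           (\<exists>C. \<forall>x\<in>{0..1}. \<forall>y\<in>{0..1}. \<bar>f' x - f' y\<bar> \<le> C * \<bar>x - y\<bar> powr \<delta>))"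

lemma dE_spec:
  assumes "\<phi> \<in> E \<delta>"
  shows "\<forall>x\<in>{0..1}. (\<phi> has_real_derivative dE \<phi> \<delta> x) (at x within {0..1})"
    "\<forall>x\<in>{0..1}. dE \<phi> \<delta> x > 0"
    "\<exists>C. C \<ge> 0 \<and> (\<forall>x\<in>{0..1}. \<forall>y\<in>{0..1}. \<bar>dE \<phi> \<delta> x - dE \<phi> \<delta> y\<bar> \<le> C * \<bar>x - y\<bar> powr \<delta>)"
    "\<phi> 0 = 0" "\<phi> 1 = 1"
proof -
  have ex: "\<exists>f'. (\<forall>x\<in>{0..1}. (\<phi> has_real_derivative f' x) (at x within {0..1})) \<and>
           (\<forall>x\<in>{0..1}. f' x > 0) \<and>
           (\<exists>C. \<forall>x\<in>{0..1}. \<forall>y\<in>{0..1}. \<bar>f' x - f' y\<bar> \<le> C * \<bar>x - y\<bar> powr \<delta>)"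
    using assms unfolding E_def by blast
  note S = someI_ex[OF ex, folded dE_def]
  show "\<forall>x\<in>{0..1}. (\<phi> has_real_derivative dE \<phi> \<delta> x) (at x within {0..1})"
    "\<forall>x\<in>{0..1}. dE \<phi> \<delta> x > 0" using S by auto
  from S obtain C where C: "\<forall>x\<in>{0..1}. \<forall>y\<in>{0..1}. \<bar>dE \<phi> \<delta> x - dE \<phi> \<delta> y\<bar> \<le> C * \<bar>x - y\<bar> powr \<delta>"
    by blast
  have "\<bar>dE \<phi> \<delta> 0 - dE \<phi> \<delta> 1\<bar> \<le> C * \<bar>0 - 1\<bar> powr \<delta>" using C[rule_format, of 0 1] by simp
  then have "C \<ge> 0" by simp
  then show "\<exists>C. C \<ge> 0 \<and> (\<forall>x\<in>{0..1}. \<forall>y\<in>{0..1}. \<bar>dE \<phi> \<delta> x - dE \<phi> \<delta> y\<bar> \<le> C * \<bar>x - y\<bar> powr \<delta>)"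
    using C by blast
  show "\<phi> 0 = 0" "\<phi> 1 = 1" using assms unfolding E_def by auto
qed

lemma pad_props:
  assumes "xs \<in> D n" "n \<ge> 1"
  shows "pad xs ! 0 = 0" "pad xs ! n = 1" "\<forall>i<n. pad xs ! i < pad xs ! Suc i"
proof -
  have len: "length xs = n - 1" and so: "sorted_wrt (<) xs" and bd: "\<forall>x\<in>set xs. 0 < x \<and> x < 1"
    using assms unfolding D_def by auto
  show "pad xs ! 0 = 0" unfolding pad_def by simp
  show "pad xs ! n = 1" unfolding pad_def using len assms(2)
    by (simp add: nth_Cons' nth_append)
  show "\<forall>i<n. pad xs ! i < pad xs ! Suc i"
  proof (intro allI impI)
    fix i assume i: "i < n"
    consider "i = 0" "n = 1" | "i = 0" "n > 1" | "i > 0" "Suc i = n" | "i > 0" "Suc i < n"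
      using i by linarith
    then show "pad xs ! i < pad xs ! Suc i"
    proof cases
      case 1 then show ?thesis unfolding pad_def using len by simp
    next
      case 2
      then have "xs ! 0 \<in> set xs" using len by auto
      then show ?thesis unfolding pad_def using 2 bd len by (simp add: nth_append)
    next
      case 3
      then have "xs ! (i - 1) \<in> set xs" using len by auto
      then show ?thesis unfolding pad_def using 3 bd len by (simp add: nth_append nth_Cons')
    next
      case 4
      then have "xs ! (i - 1) < xs ! i" using so len by (simp add: sorted_wrt_iff_nth_less)
      moreover have "i - 1 < n - 1" "i < n - 1" using 4 by auto
      ultimately show ?thesis unfolding pad_def using 4 len by (simp add: nth_append nth_Cons')
    qed
  qed
qed


lemma E_glue:
  fixes X Y :: "nat \<Rightarrow> real" and \<phi> :: "nat \<Rightarrow> real \<Rightarrow> real"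
  assumes n: "n \<ge> 1" and Xs: "\<forall>i<n. X i < X (Suc i)" and X0: "X 0 = 0" and Xn: "X n = 1"
    and Ys: "\<forall>i<n. Y i < Y (Suc i)" and Y0: "Y 0 = 0" and Yn: "Y n = 1"
    and \<delta>: "0 < \<delta>" and \<phi>E: "\<forall>i\<in>{1..n}. \<phi> i \<in> E \<delta>"
    and match: "\<forall>k\<in>{1..<n}. (Y k - Y (k - 1)) / (X k - X (k - 1)) * dE (\<phi> k) \<delta> 1
                = (Y (Suc k) - Y k) / (X (Suc k) - X k) * dE (\<phi> (Suc k)) \<delta> 0"
  shows "\<exists>\<psi>\<in>E \<delta>. \<forall>i\<in>{1..n}. \<forall>t\<in>{X (i - 1)..X i}.
           \<psi> t = affdist (\<phi> i) (X (i - 1)) (X i) (Y (i - 1)) (Y i) t"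
proof -
  define g where "g i = affdist (\<phi> i) (X (i - 1)) (X i) (Y (i - 1)) (Y i)" for i
  define g' where "g' i t = (Y i - Y (i - 1)) / (X i - X (i - 1)) * dE (\<phi> i) \<delta> ((t - X (i - 1)) / (X i - X (i - 1)))" for i t
  define \<psi> where "\<psi> t = g (pidx X t) t" for t
  define \<psi>' where "\<psi>' t = g' (pidx X t) t" for t
  have Xlt: "X (i - 1) < X i" if "i \<in> {1..n}" for i using Xs[rule_format, of "i - 1"] that by auto
  have Ylt: "Y (i - 1) < Y i" if "i \<in> {1..n}" for i using Ys[rule_format, of "i - 1"] that by auto
  have agree: "\<forall>i\<in>{1..<n}. g i (X i) = g (Suc i) (X i)"
  proof
    fix i assume i: "i \<in> {1..<n}"
    have a: "X (i - 1) < X i" "X i < X (Suc i)" using Xlt[of i] Xlt[of "Suc i"] i by auto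
    have "\<phi> i \<in> E \<delta>" "\<phi> (Suc i) \<in> E \<delta>" using \<phi>E i by auto
    then have "\<phi> i 1 = 1" "\<phi> (Suc i) 0 = 0" using dE_spec by auto
    then show "g i (X i) = g (Suc i) (X i)" unfolding g_def affdist_def using a by simp
  qed
  have agree': "\<forall>i\<in>{1..<n}. g' i (X i) = g' (Suc i) (X i)"
  proof
    fix i assume i: "i \<in> {1..<n}"
    have a: "X (i - 1) < X i" "X i < X (Suc i)" using Xlt[of i] Xlt[of "Suc i"] i by auto
    then show "g' i (X i) = g' (Suc i) (X i)" unfolding g'_def using match i by simp
  qed
  have \<psi>g: "\<forall>i\<in>{1..n}. \<forall>t\<in>{X (i - 1)..X i}. \<psi> t = g i t"
    unfolding \<psi>_def using glue_exists[OF n Xs agree] .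
  have \<psi>g': "\<forall>i\<in>{1..n}. \<forall>t\<in>{X (i - 1)..X i}. \<psi>' t = g' i t"
    unfolding \<psi>'_def using glue_exists[OF n Xs agree'] .
  have U: "(\<Union>i\<in>{1..n}. {X (i - 1)..X i}) = {0..1}" using part_union[OF n Xs X0 Xn] .
  have gd: "(g i has_real_derivative g' i t) (at t within {X (i - 1)..X i})"
    if i: "i \<in> {1..n}" and t: "t \<in> {X (i - 1)..X i}" for i t
  proof -
    have "\<phi> i \<in> E \<delta>" using \<phi>E i by auto
    note S = dE_spec[OF this]
    show ?thesis unfolding g_def g'_def
      by (rule affdist_deriv[OF Xlt[OF i] S(1) t])
  qed
  have gpos: "g' i t > 0" if i: "i \<in> {1..n}" and t: "t \<in> {X (i - 1)..X i}" for i t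
  proof -
    have "\<phi> i \<in> E \<delta>" using \<phi>E i by auto
    note S = dE_spec[OF this]
    have "(t - X (i - 1)) / (X i - X (i - 1)) \<in> {0..1}" using t Xlt[OF i] by (auto simp: field_simps)
    then have "dE (\<phi> i) \<delta> ((t - X (i - 1)) / (X i - X (i - 1))) > 0" using S(2) by blast
    then show ?thesis unfolding g'_def using Xlt[OF i] Ylt[OF i] by simp
  qed
  have dpsi: "(\<psi> has_real_derivative \<psi>' x) (at x within {0..1})" if x: "x \<in> {0..1}" for x
  proof -
    have "\<forall>i\<in>{1..n}. (\<psi> has_real_derivative \<psi>' x) (at x within {X (i - 1)..X i})"
    proof
      fix i assume i: "i \<in> {1..n}"
      show "(\<psi> has_real_derivative \<psi>' x) (at x within {X (i - 1)..X i})"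
      proof (cases "x \<in> {X (i - 1)..X i}")
        case True
        have "(g i has_real_derivative g' i x) (at x within {X (i - 1)..X i})" using gd[OF i True] .
        then have "(\<psi> has_real_derivative g' i x) (at x within {X (i - 1)..X i})"
          by (rule has_field_derivative_transform_within[where d=1]) (use True \<psi>g i in auto)
        then show ?thesis using \<psi>g' i True by simp
      next
        case False
        then show ?thesis by (intro deriv_within_trivial) auto
      qed
    qed
    from deriv_within_UN[OF _ this] show ?thesis using U by simp
  qed
  have pos: "\<psi>' x > 0" if x: "x \<in> {0..1}" for x
  proof -
    obtain i where i: "i \<in> {1..n}" "x \<in> {X (i - 1)..X i}" using x U by blast
    then show ?thesis using gpos \<psi>g' by auto
  qed
  have "\<forall>i\<in>{1..n}. \<exists>C. C \<ge> 0 \<and> (\<forall>x\<in>{0..1}. \<forall>y\<in>{0..1}. \<bar>dE (\<phi> i) \<delta> x - dE (\<phi> i) \<delta> y\<bar> \<le> C * \<bar>x - y\<bar> powr \<delta>)"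
    using \<phi>E dE_spec(3) by blast
  from bchoice[OF this] obtain C where C: "\<forall>i\<in>{1..n}. C i \<ge> 0 \<and> (\<forall>x\<in>{0..1}. \<forall>y\<in>{0..1}. \<bar>dE (\<phi> i) \<delta> x - dE (\<phi> i) \<delta> y\<bar> \<le> C i * \<bar>x - y\<bar> powr \<delta>)"
    by blast
  define Ki where "Ki i = (Y i - Y (i - 1)) / (X i - X (i - 1)) * C i / (X i - X (i - 1)) powr \<delta>" for i
  define K where "K = (\<Sum>i\<in>{1..n}. Ki i)"
  have Ki0: "Ki i \<ge> 0" if "i \<in> {1..n}" for i
    unfolding Ki_def using C Xlt[OF that] Ylt[OF that] that by auto
  have K0: "K \<ge> 0" unfolding K_def using Ki0 by (intro sum_nonneg) auto
  have KiK: "Ki i \<le> K" if "i \<in> {1..n}" for i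
    unfolding K_def using Ki0 that by (intro member_le_sum) auto
  have Hp: "\<forall>i\<in>{1..n}. \<forall>x\<in>{X (i - 1)..X i}. \<forall>y\<in>{X (i - 1)..X i}. \<bar>\<psi>' x - \<psi>' y\<bar> \<le> K * \<bar>x - y\<bar> powr \<delta>"
  proof (intro ballI)
    fix i x y assume i: "i \<in> {1..n}" and x: "x \<in> {X (i - 1)..X i}" and y: "y \<in> {X (i - 1)..X i}"
    define a where "a = X i - X (i - 1)"
    define s where "s = (Y i - Y (i - 1)) / a"
    define u where "u = (x - X (i - 1)) / a"
    define v where "v = (y - X (i - 1)) / a"
    have a0: "a > 0" unfolding a_def using Xlt[OF i] by simp
    have s0: "s > 0" unfolding s_def using a0 Ylt[OF i] by simp
    have uv: "u \<in> {0..1}" "v \<in> {0..1}" unfolding u_def v_def a_def using x y Xlt[OF i] by (auto simp: field_simps)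
    have "\<bar>\<psi>' x - \<psi>' y\<bar> = \<bar>g' i x - g' i y\<bar>" using \<psi>g' i x y by simp
    also have "\<dots> = s * \<bar>dE (\<phi> i) \<delta> u - dE (\<phi> i) \<delta> v\<bar>"
    proof -
      have "g' i x = s * dE (\<phi> i) \<delta> u" "g' i y = s * dE (\<phi> i) \<delta> v"
        unfolding g'_def s_def u_def v_def a_def by simp_all
      then show ?thesis using s0 by (simp add: right_diff_distrib[symmetric] abs_mult)
    qed
    also have "\<dots> \<le> s * (C i * \<bar>u - v\<bar> powr \<delta>)"
      using C i uv s0 by (intro mult_left_mono) auto
    also have "\<bar>u - v\<bar> = \<bar>x - y\<bar> / a" unfolding u_def v_def using a0 by (simp add: field_simps)
    also have "s * (C i * (\<bar>x - y\<bar> / a) powr \<delta>) = Ki i * \<bar>x - y\<bar> powr \<delta>"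
      unfolding Ki_def s_def a_def using a0 by (simp add: powr_divide a_def)
    also have "\<dots> \<le> K * \<bar>x - y\<bar> powr \<delta>" using KiK[OF i] by (intro mult_right_mono) auto
    finally show "\<bar>\<psi>' x - \<psi>' y\<bar> \<le> K * \<bar>x - y\<bar> powr \<delta>" .
  qed
  have hol: "\<forall>x\<in>{0..1}. \<forall>y\<in>{0..1}. \<bar>\<psi>' x - \<psi>' y\<bar> \<le> (real n * K) * \<bar>x - y\<bar> powr \<delta>"
    by (rule holder_glue[OF n Xs X0 Xn _ K0 Hp]) (use \<delta> in simp)
  have "\<phi> 1 \<in> E \<delta>" "\<phi> n \<in> E \<delta>" using \<phi>E n by auto
  then have p10: "\<phi> 1 0 = 0" and pn1: "\<phi> n 1 = 1" using dE_spec by auto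
  have X1: "0 \<le> X 1" using Xs[rule_format, of 0] n X0 by auto
  have \<psi>0: "\<psi> 0 = 0" using \<psi>g[rule_format, of 1 0] n X0 X1 Xlt[of 1] p10 Y0
    unfolding g_def affdist_def by simp
  have Xn1: "X (n - 1) \<le> 1" using Xlt[of n] n Xn by auto
  have \<psi>1: "\<psi> 1 = 1" using \<psi>g[rule_format, of n 1] n Xn Xn1 Xlt[of n] pn1 Yn
    unfolding g_def affdist_def by simp
  have smono: "\<psi> x < \<psi> y" if "0 \<le> x" "x < y" "y \<le> 1" for x y
    using deriv_pos_strict_mono[of 0 1 \<psi> \<psi>' x y] dpsi pos that by auto
  have cont: "continuous_on {0..1} \<psi>" using dpsi by (intro DERIV_continuous_on) auto
  have bij: "bij_betw \<psi> {0..1} {0..1}"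
    unfolding bij_betw_def
  proof
    show "inj_on \<psi> {0..1}"
    proof (rule inj_onI)
      fix x y :: real assume "x \<in> {0..1}" "y \<in> {0..1}" "\<psi> x = \<psi> y"
      then show "x = y" using smono[of x y] smono[of y x] by (cases x y rule: linorder_cases) auto
    qed
    show "\<psi> ` {0..1} = {0..1}"
    proof
      show "\<psi> ` {0..1} \<subseteq> {0..1}"
      proof clarify
        fix x :: real assume x: "x \<in> {0..1}"
        have "\<psi> 0 \<le> \<psi> x" using smono[of 0 x] x by (cases "x = 0") auto
        moreover have "\<psi> x \<le> \<psi> 1" using smono[of x 1] x by (cases "x = 1") auto
        ultimately show "\<psi> x \<in> {0..1}" using \<psi>0 \<psi>1 by auto
      qed
      show "{0..1} \<subseteq> \<psi> ` {0..1}"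
      proof
        fix y :: real assume y: "y \<in> {0..1}"
        then obtain x where "0 \<le> x" "x \<le> 1" "\<psi> x = y"
          using IVT'[of \<psi> 0 y 1] \<psi>0 \<psi>1 cont by auto
        then show "y \<in> \<psi> ` {0..1}" by force
      qed
    qed
  qed
  have "\<psi> \<in> E \<delta>" unfolding E_def using \<psi>0 \<psi>1 bij dpsi pos hol by blast
  moreover have "\<forall>i\<in>{1..n}. \<forall>t\<in>{X (i - 1)..X i}. \<psi> t = affdist (\<phi> i) (X (i - 1)) (X i) (Y (i - 1)) (Y i) t"
    using \<psi>g unfolding g_def by blast
  ultimately show ?thesis by blast
qed


lemma deriv_unique_interval:
  fixes f :: "real \<Rightarrow> real"
  assumes "a < b" "x \<in> {a..b}" "(f has_real_derivative D1) (at x within {a..b})"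
    "(f has_real_derivative D2) (at x within {a..b})"
  shows "D1 = D2"
  using vector_derivative_unique_within_closed_interval[of a b x f D1 D2] assms
  by (simp add: has_real_derivative_iff_has_vector_derivative)

lemma E_match:
  fixes X Y :: "nat \<Rightarrow> real" and \<phi> :: "nat \<Rightarrow> real \<Rightarrow> real"
  assumes n: "n \<ge> 1" and Xs: "\<forall>i<n. X i < X (Suc i)" and X0: "X 0 = 0" and Xn: "X n = 1"
    and \<phi>E: "\<forall>i\<in>{1..n}. \<phi> i \<in> E \<delta>"
    and \<psi>E: "\<psi> \<in> E \<delta>"
    and \<psi>eq: "\<forall>i\<in>{1..n}. \<forall>t\<in>{X (i - 1)..X i}.
           \<psi> t = affdist (\<phi> i) (X (i - 1)) (X i) (Y (i - 1)) (Y i) t"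
  shows "\<forall>k\<in>{1..<n}. (Y k - Y (k - 1)) / (X k - X (k - 1)) * dE (\<phi> k) \<delta> 1
                = (Y (Suc k) - Y k) / (X (Suc k) - X k) * dE (\<phi> (Suc k)) \<delta> 0"
proof
  fix k assume k: "k \<in> {1..<n}"
  obtain \<psi>' where d\<psi>: "\<forall>x\<in>{0..1}. (\<psi> has_real_derivative \<psi>' x) (at x within {0..1})"
    using \<psi>E unfolding E_def by blast
  have Xlt: "X (i - 1) < X i" if "i \<in> {1..n}" for i using Xs[rule_format, of "i - 1"] that by auto
  have U: "(\<Union>i\<in>{1..n}. {X (i - 1)..X i}) = {0..1}" using part_union[OF n Xs X0 Xn] .
  have val: "\<psi>' t = (Y i - Y (i - 1)) / (X i - X (i - 1)) * dE (\<phi> i) \<delta> ((t - X (i - 1)) / (X i - X (i - 1)))"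
    if i: "i \<in> {1..n}" and t: "t \<in> {X (i - 1), X i}" for i t
  proof -
    have sub: "{X (i - 1)..X i} \<subseteq> {0..1}" using U i by blast
    have tS: "t \<in> {X (i - 1)..X i}" using t Xlt[OF i] by auto
    then have t01: "t \<in> {0..1}" using sub by blast
    have "\<phi> i \<in> E \<delta>" using \<phi>E i by auto
    note S = dE_spec[OF this]
    have d1: "(\<psi> has_real_derivative \<psi>' t) (at t within {X (i - 1)..X i})"
      using d\<psi> t01 sub by (blast intro: DERIV_subset)
    have "(affdist (\<phi> i) (X (i - 1)) (X i) (Y (i - 1)) (Y i) has_real_derivative
        (Y i - Y (i - 1)) / (X i - X (i - 1)) * dE (\<phi> i) \<delta> ((t - X (i - 1)) / (X i - X (i - 1))))
        (at t within {X (i - 1)..X i})"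
      by (rule affdist_deriv[OF Xlt[OF i] S(1) tS])
    then have d2: "(\<psi> has_real_derivative
        (Y i - Y (i - 1)) / (X i - X (i - 1)) * dE (\<phi> i) \<delta> ((t - X (i - 1)) / (X i - X (i - 1))))
        (at t within {X (i - 1)..X i})"
      by (rule has_field_derivative_transform_within[where d=1]) (use tS \<psi>eq i in auto)
    show ?thesis using deriv_unique_interval[OF Xlt[OF i] tS d1 d2] by simp
  qed
  have k1: "k \<in> {1..n}" "Suc k \<in> {1..n}" using k by auto
  have a: "X (k - 1) < X k" "X k < X (Suc k)" using Xlt[OF k1(1)] Xlt[OF k1(2)] by auto
  have "\<psi>' (X k) = (Y k - Y (k - 1)) / (X k - X (k - 1)) * dE (\<phi> k) \<delta> 1"
    using val[OF k1(1), of "X k"] a by simp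
  moreover have "\<psi>' (X k) = (Y (Suc k) - Y k) / (X (Suc k) - X k) * dE (\<phi> (Suc k)) \<delta> 0"
    using val[OF k1(2), of "X k"] a by simp
  ultimately show "(Y k - Y (k - 1)) / (X k - X (k - 1)) * dE (\<phi> k) \<delta> 1
                = (Y (Suc k) - Y k) / (X (Suc k) - X k) * dE (\<phi> (Suc k)) \<delta> 0" by simp
qed


lemma tele:
  fixes X :: "nat \<Rightarrow> real"
  shows "(\<Sum>k\<in>{1..m}. X k - X (k - 1)) = X m - X 0"
  by (induction m) (auto simp: atLeastAtMostSuc_conv)

lemma match_unique:
  fixes X X' b d e :: "nat \<Rightarrow> real"
  assumes n: "n \<ge> 1" and Xs: "\<forall>i<n. X i < X (Suc i)" and X0: "X 0 = 0" and Xn: "X n = 1"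
    and X's: "\<forall>i<n. X' i < X' (Suc i)" and X'0: "X' 0 = 0" and X'n: "X' n = 1"
    and pos: "\<forall>k\<in>{1..n}. b k > 0 \<and> d k > 0 \<and> e k > 0"
    and mX: "\<forall>k\<in>{1..<n}. b k / (X k - X (k - 1)) * e k = b (Suc k) / (X (Suc k) - X k) * d (Suc k)"
    and mX': "\<forall>k\<in>{1..<n}. b k / (X' k - X' (k - 1)) * e k = b (Suc k) / (X' (Suc k) - X' k) * d (Suc k)"
  shows "\<forall>k\<le>n. X k = X' k"
proof -
  define A where "A k = X k - X (k - 1)" for k
  define A' where "A' k = X' k - X' (k - 1)" for k
  define R where "R k = b (Suc k) * d (Suc k) / (b k * e k)" for k
  have Ap: "A k > 0" "A' k > 0" if "k \<in> {1..n}" for k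
    unfolding A_def A'_def using Xs[rule_format, of "k - 1"] X's[rule_format, of "k - 1"] that by auto
  have rec: "A (Suc k) = A k * R k" "A' (Suc k) = A' k * R k" if k: "k \<in> {1..<n}" for k
  proof -
    have k1: "k \<in> {1..n}" "Suc k \<in> {1..n}" using k by auto
    have p: "b k > 0" "e k > 0" "b (Suc k) > 0" "d (Suc k) > 0" using pos k1 by auto
    have "b k / A k * e k = b (Suc k) / A (Suc k) * d (Suc k)" using mX k unfolding A_def by simp
    then show "A (Suc k) = A k * R k" unfolding R_def using Ap[OF k1(1)] Ap[OF k1(2)] p
      by (simp add: field_simps)
    have "b k / A' k * e k = b (Suc k) / A' (Suc k) * d (Suc k)" using mX' k unfolding A'_def by simp
    then show "A' (Suc k) = A' k * R k" unfolding R_def using Ap[OF k1(1)] Ap[OF k1(2)] p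
      by (simp add: field_simps)
  qed
  define lm where "lm = A' 1 / A 1"
  have lam: "A' k = lm * A k" if "k \<in> {1..n}" for k
    using that
  proof (induction k)
    case 0 then show ?case by simp
  next
    case (Suc k)
    show ?case
    proof (cases "k = 0")
      case True then show ?thesis unfolding lm_def using Ap[of 1] n by simp
    next
      case False
      then have k: "k \<in> {1..<n}" using Suc.prems by auto
      then have "A' k = lm * A k" using Suc.IH by auto
      then show ?thesis using rec[OF k] by simp
    qed
  qed
  have sA: "(\<Sum>k\<in>{1..n}. A k) = 1" unfolding A_def using tele[of X n] X0 Xn by simp
  have sA': "(\<Sum>k\<in>{1..n}. A' k) = 1" unfolding A'_def using tele[of X' n] X'0 X'n by simp
  have "(\<Sum>k\<in>{1..n}. A' k) = lm * (\<Sum>k\<in>{1..n}. A k)"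
    by (simp add: sum_distrib_left lam)
  then have l1: "lm = 1" using sA sA' by simp
  show ?thesis
  proof (intro allI impI)
    fix k assume k: "k \<le> n"
    have "X k = (\<Sum>i\<in>{1..k}. A i)" unfolding A_def using tele[of X k] X0 by simp
    also have "\<dots> = (\<Sum>i\<in>{1..k}. A' i)" using lam l1 k by (intro sum.cong) auto
    also have "\<dots> = X' k" unfolding A'_def using tele[of X' k] X'0 by simp
    finally show "X k = X' k" .
  qed
qed

primrec wseq :: "(nat \<Rightarrow> real) \<Rightarrow> nat \<Rightarrow> real" where
  "wseq R 0 = 1"
| "wseq R (Suc k) = (if k = 0 then 1 else wseq R k * R k)"

lemma match_exists:
  fixes b d e :: "nat \<Rightarrow> real"
  assumes n: "n \<ge> 1"
    and pos: "\<forall>k\<in>{1..n}. b k > 0 \<and> d k > 0 \<and> e k > 0"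
  shows "\<exists>X. (\<forall>i<n. X i < X (Suc i)) \<and> X 0 = 0 \<and> X n = 1 \<and>
    (\<forall>k\<in>{1..<n}. b k / (X k - X (k - 1)) * e k = b (Suc k) / (X (Suc k) - X k) * d (Suc k))"
proof -
  define R where "R k = b (Suc k) * d (Suc k) / (b k * e k)" for k
  define w where "w = wseq R"
  have wp: "w k > 0" if "k \<in> {1..n}" for k
    using that
  proof (induction k)
    case 0 then show ?case by simp
  next
    case (Suc k)
    show ?case
    proof (cases "k = 0")
      case True then show ?thesis unfolding w_def by simp
    next
      case False
      then have "k \<in> {1..n}" "Suc k \<in> {1..n}" using Suc.prems by auto
      then have "w k > 0" "R k > 0" using Suc.IH pos unfolding R_def by auto
      then show ?thesis using False unfolding w_def by simp
    qed
  qed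
  define W where "W = (\<Sum>i\<in>{1..n}. w i)"
  have W0: "W > 0" unfolding W_def using wp n by (intro sum_pos) auto
  define X where "X k = (\<Sum>i\<in>{1..k}. w i) / W" for k
  have Xd: "X k - X (k - 1) = w k / W" if "k \<ge> 1" for k
  proof -
    have "{1..k} = insert k {1..k - 1}" using that by auto
    moreover have "k \<notin> {1..k - 1}" by auto
    ultimately have "(\<Sum>i\<in>{1..k}. w i) = w k + (\<Sum>i\<in>{1..k - 1}. w i)" by simp
    then show ?thesis unfolding X_def by (simp add: diff_divide_distrib[symmetric])
  qed
  have "\<forall>i<n. X i < X (Suc i)"
  proof (intro allI impI)
    fix i assume "i < n"
    then have "w (Suc i) > 0" using wp by auto
    then have "w (Suc i) / W > 0" using W0 by simp
    then show "X i < X (Suc i)" using Xd[of "Suc i"] by simp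
  qed
  moreover have "X 0 = 0" unfolding X_def by simp
  moreover have "X n = 1" unfolding X_def W_def using W0 W_def by simp
  moreover have "\<forall>k\<in>{1..<n}. b k / (X k - X (k - 1)) * e k = b (Suc k) / (X (Suc k) - X k) * d (Suc k)"
  proof
    fix k assume k: "k \<in> {1..<n}"
    have k1: "k \<in> {1..n}" "Suc k \<in> {1..n}" using k by auto
    have p: "b k > 0" "e k > 0" "b (Suc k) > 0" "d (Suc k) > 0" using pos k1 by auto
    have ws: "w (Suc k) = w k * R k" unfolding w_def using k by simp
    have wk: "w k > 0" using wp k1 by auto
    have e1: "X k - X (k - 1) = w k / W" using Xd[of k] k by simp
    have e2: "X (Suc k) - X k = w k * R k / W" using Xd[of "Suc k"] ws by simp
    have "b k / (w k / W) * e k = b (Suc k) / (w k * R k / W) * d (Suc k)"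
      using wk p W0 unfolding R_def by (simp add: field_simps)
    then show "b k / (X k - X (k - 1)) * e k = b (Suc k) / (X (Suc k) - X k) * d (Suc k)"
      unfolding e1 e2 .
  qed
  ultimately show ?thesis by blast
qed


theorem mainTheorem20:
  fixes \<delta> :: real and n :: nat and ys :: "real list" and \<phi> :: "nat \<Rightarrow> real \<Rightarrow> real"
  assumes "0 < \<delta>" and "\<delta> < 1/2" and "n \<ge> 1"
    and "ys \<in> D n"
    and "\<forall>i\<in>{1..n}. \<phi> i \<in> E \<delta>"
  shows "\<exists>!xs. xs \<in> D n \<and>
           (\<exists>\<psi>\<in>E \<delta>. \<forall>i\<in>{1..n}. \<forall>t\<in>{pad xs ! (i - 1) .. pad xs ! i}.
              \<psi> t = affdist (\<phi> i) (pad xs ! (i - 1)) (pad xs ! i) (pad ys ! (i - 1)) (pad ys ! i) t)"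
proof -
  note n = assms(3) and \<phi>E = assms(5)
  define Y where "Y k = pad ys ! k" for k
  note YP = pad_props[OF assms(4) n, folded Y_def]
  define b where "b k = Y k - Y (k - 1)" for k
  define e where "e k = dE (\<phi> k) \<delta> 1" for k
  define d where "d k = dE (\<phi> k) \<delta> 0" for k
  have pos: "\<forall>k\<in>{1..n}. b k > 0 \<and> d k > 0 \<and> e k > 0"
  proof
    fix k assume k: "k \<in> {1..n}"
    have "b k > 0" unfolding b_def using YP(3)[rule_format, of "k - 1"] k by auto
    moreover have "d k > 0" "e k > 0" unfolding d_def e_def using dE_spec(2)[of "\<phi> k" \<delta>] \<phi>E k by auto
    ultimately show "b k > 0 \<and> d k > 0 \<and> e k > 0" by simp
  qed
  obtain X where Xs: "\<forall>i<n. X i < X (Suc i)" and X0: "X 0 = 0" and Xn: "X n = 1"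
    and mX: "\<forall>k\<in>{1..<n}. b k / (X k - X (k - 1)) * e k = b (Suc k) / (X (Suc k) - X k) * d (Suc k)"
    using match_exists[OF n pos] by blast
  define xs where "xs = map X [1..<n]"
  have padX: "pad xs ! k = X k" if kn: "k \<le> n" for k
  proof -
    consider "k = 0" | "k = n" "k > 0" | "0 < k" "k < n" using kn by linarith
    then show ?thesis
    proof cases
      case 1 then show ?thesis unfolding pad_def using X0 by simp
    next
      case 2 then show ?thesis unfolding pad_def xs_def using Xn by (simp add: nth_append)
    next
      case 3 then show ?thesis unfolding pad_def xs_def by (simp add: nth_append nth_Cons')
    qed
  qed
  have xsD: "xs \<in> D n"
  proof -
    have "length xs = n - 1" unfolding xs_def by simp
    moreover have "sorted_wrt (<) xs"
      unfolding sorted_wrt_iff_nth_less xs_def using part_mono[OF Xs] by auto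
    moreover have "\<forall>x\<in>set xs. 0 < x \<and> x < 1"
    proof
      fix x assume "x \<in> set xs"
      then obtain k where k: "1 \<le> k" "k < n" "x = X k" unfolding xs_def by auto
      then show "0 < x \<and> x < 1" using part_mono[OF Xs, of 0 k] part_mono[OF Xs, of k n] X0 Xn by auto
    qed
    ultimately show ?thesis unfolding D_def by blast
  qed
  have match: "\<forall>k\<in>{1..<n}. (Y k - Y (k - 1)) / (X k - X (k - 1)) * dE (\<phi> k) \<delta> 1
                = (Y (Suc k) - Y k) / (X (Suc k) - X k) * dE (\<phi> (Suc k)) \<delta> 0"
    using mX unfolding b_def d_def e_def by simp
  obtain \<psi> where \<psi>: "\<psi> \<in> E \<delta>" and \<psi>eq: "\<forall>i\<in>{1..n}. \<forall>t\<in>{X (i - 1)..X i}.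
           \<psi> t = affdist (\<phi> i) (X (i - 1)) (X i) (Y (i - 1)) (Y i) t"
    using E_glue[OF n Xs X0 Xn YP(3) YP(1) YP(2) assms(1) \<phi>E match] by blast
  have ex: "xs \<in> D n \<and>
           (\<exists>\<psi>\<in>E \<delta>. \<forall>i\<in>{1..n}. \<forall>t\<in>{pad xs ! (i - 1) .. pad xs ! i}.
              \<psi> t = affdist (\<phi> i) (pad xs ! (i - 1)) (pad xs ! i) (pad ys ! (i - 1)) (pad ys ! i) t)"
  proof (intro conjI bexI[OF _ \<psi>] ballI xsD)
    fix i t assume i: "i \<in> {1..n}" and t: "t \<in> {pad xs ! (i - 1) .. pad xs ! i}"
    have p: "pad xs ! (i - 1) = X (i - 1)" "pad xs ! i = X i" using padX i by auto
    show "\<psi> t = affdist (\<phi> i) (pad xs ! (i - 1)) (pad xs ! i) (pad ys ! (i - 1)) (pad ys ! i) t"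
      using \<psi>eq i t unfolding p Y_def by blast
  qed
  have uniq: "xs' = xs" if xs': "xs' \<in> D n" and ex': "\<exists>\<psi>\<in>E \<delta>. \<forall>i\<in>{1..n}. \<forall>t\<in>{pad xs' ! (i - 1) .. pad xs' ! i}.
              \<psi> t = affdist (\<phi> i) (pad xs' ! (i - 1)) (pad xs' ! i) (pad ys ! (i - 1)) (pad ys ! i) t" for xs'
  proof -
    define X' where "X' k = pad xs' ! k" for k
    note XP = pad_props[OF xs' n, folded X'_def]
    obtain \<psi>' where \<psi>': "\<psi>' \<in> E \<delta>" and eq': "\<forall>i\<in>{1..n}. \<forall>t\<in>{X' (i - 1)..X' i}.
           \<psi>' t = affdist (\<phi> i) (X' (i - 1)) (X' i) (Y (i - 1)) (Y i) t"
      using ex' unfolding X'_def Y_def by blast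
    have m': "\<forall>k\<in>{1..<n}. (Y k - Y (k - 1)) / (X' k - X' (k - 1)) * dE (\<phi> k) \<delta> 1
                = (Y (Suc k) - Y k) / (X' (Suc k) - X' k) * dE (\<phi> (Suc k)) \<delta> 0"
      by (rule E_match[OF n XP(3) XP(1) XP(2) \<phi>E \<psi>' eq'])
    then have mX': "\<forall>k\<in>{1..<n}. b k / (X' k - X' (k - 1)) * e k = b (Suc k) / (X' (Suc k) - X' k) * d (Suc k)"
      unfolding b_def d_def e_def by simp
    have eqX: "\<forall>k\<le>n. X k = X' k"
      by (rule match_unique[OF n Xs X0 Xn XP(3) XP(1) XP(2) pos mX mX'])
    have l: "length xs' = n - 1" "length xs = n - 1" using xs' xsD unfolding D_def by auto
    show "xs' = xs"
    proof (rule nth_equalityI)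
      show "length xs' = length xs" using l by simp
      fix j assume j: "j < length xs'"
      have "xs' ! j = X' (Suc j)" unfolding X'_def pad_def using j by (simp add: nth_append)
      moreover have "xs ! j = X (Suc j)" using padX[of "Suc j"] j l unfolding pad_def by (simp add: nth_append)
      ultimately show "xs' ! j = xs ! j" using eqX j l by simp
    qed
  qed
  show ?thesis using ex uniq by blast
qed

end
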